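(* Consider online gradient descent $A$ on a finite-dimensional space with learning rates $\eta_t$ such that $\sum_{t=1}^T\eta_t=O(\rho_1(T))$. If $R_0(A)=O(\rho_2(T))$, then $R'_0(A)=O(\rho_1(T)+\rho_2(T))$.
   Context: The decision space $F\subseteq(\mathbb{R}^+)^n$ is non-empty, convex, bounded and closed; $\|\cdot\|$ is a seminorm on $\mathbb{R}^n$; cost functions $c^t:F\to\mathbb{R}^+$ are convex with (sub)gradients whose Euclidean norms $\|\nabla c^t(\cdot)\|_2$ are uniformly bounded over the sequence. Online gradient descent (OGD) with learning rates $\eta_t$: select an arbitrary $x^1\in F$, and at each step $t\ge1$ set $x^{t+1}=P(x^t-\eta_t\nabla c^t(x^t))$, where $P(y)=\arg\min_{x\in F}\|x-y\|_2$ is the Euclidean projection onto $F$; here $x^t$ is chosen before $c^t$ is revealed. With $x^0=0$, $C_0^\alpha(A)=\sum_{t=1}^T c^t(x^t)+\alpha\|x^t-x^{t-1}\|$ and $OPT_s=\min_{x\in F}\sum_{t=1}^Tc^t(x)$. The regret $R_0(A)$ is (at most) $\rho(T)$ if $C_0^0(A)-OPT_s\le\rho(T)$ for every admissible cost sequence, and $R'_0(A)$ is defined the same way with $C_0^1(A)$ in place of $C_0^0(A)$. *)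

theory Defs
  imports "HOL-Analysis.Analysis" "HOL-Library.Landau_Symbols"
begin

definition seminorm :: "('a::real_vector \<Rightarrow> real) \<Rightarrow> bool" where
  "seminorm N \<longleftrightarrow> (\<forall>x. 0 \<le> N x) \<and> (\<forall>x y. N (x + y) \<le> N x + N y)
      \<and> (\<forall>c x. N (c *\<^sub>R x) = \<bar>c\<bar> * N x)"

definition decision_space :: "(real ^ 'n) set \<Rightarrow> bool" where
  "decision_space F \<longleftrightarrow> F \<noteq> {} \<and> convex F \<and> bounded F \<and> closed F
      \<and> (\<forall>x\<in>F. \<forall>i. 0 \<le> x $ i)"

definition admissible ::
  "(real ^ 'n) set \<Rightarrow> real \<Rightarrow> (nat \<Rightarrow> real ^ 'n \<Rightarrow> real) \<Rightarrow> (nat \<Rightarrow> real ^ 'n \<Rightarrow> real ^ 'n) \<Rightarrow> bool"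
  where
  "admissible F G c g \<longleftrightarrow> (\<forall>t. convex_on F (c t) \<and> (\<forall>x\<in>F. 0 \<le> c t x)
      \<and> (\<forall>x\<in>F. \<forall>y\<in>F. c t x + g t x \<bullet> (y - x) \<le> c t y)
      \<and> (\<forall>x\<in>F. norm (g t x) \<le> G))"

fun ogd :: "(real ^ 'n) set \<Rightarrow> (nat \<Rightarrow> real) \<Rightarrow> (nat \<Rightarrow> real ^ 'n \<Rightarrow> real ^ 'n)
            \<Rightarrow> real ^ 'n \<Rightarrow> nat \<Rightarrow> real ^ 'n" where
  "ogd F eta g x1 0 = 0"
| "ogd F eta g x1 (Suc 0) = x1"
| "ogd F eta g x1 (Suc (Suc t)) =
     closest_point F (ogd F eta g x1 (Suc t) - eta (Suc t) *\<^sub>R g (Suc t) (ogd F eta g x1 (Suc t)))"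

definition cost :: "(real ^ 'n \<Rightarrow> real) \<Rightarrow> real \<Rightarrow> (nat \<Rightarrow> real ^ 'n \<Rightarrow> real)
                    \<Rightarrow> (nat \<Rightarrow> real ^ 'n) \<Rightarrow> nat \<Rightarrow> real" where
  "cost N \<alpha> c x T = (\<Sum>t=1..T. c t (x t) + \<alpha> * N (x t - x (t - 1)))"

definition OPT_s :: "(real ^ 'n) set \<Rightarrow> (nat \<Rightarrow> real ^ 'n \<Rightarrow> real) \<Rightarrow> nat \<Rightarrow> real" where
  "OPT_s F c T = (INF y\<in>F. \<Sum>t=1..T. c t y)"

end

theory Submission imports Defs begin
lemma seminorm_sum: assumes "seminorm N" shows "N (sum f A) \<le> (\<Sum>a\<in>A. N (f a))"
proof (induction A rule: infinite_finite_induct)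
  case (infinite A) then show ?case using assms unfolding seminorm_def
    by (metis order.refl real_vector.scale_zero_left abs_zero mult_zero_left sum.infinite)
next
  case empty then show ?case using assms unfolding seminorm_def
    by (metis order.refl real_vector.scale_zero_left abs_zero mult_zero_left sum.empty)
next
  case (insert x F) then show ?case using assms unfolding seminorm_def
    by (smt (verit) sum.insert)
qed

lemma seminorm_bound: fixes N :: "real^'n \<Rightarrow> real" assumes "seminorm N"
  shows "N v \<le> (\<Sum>i\<in>UNIV. N (axis i 1)) * norm v"
proof -
  have "v = (\<Sum>i\<in>UNIV. v$i *\<^sub>R axis i 1)"
    by (simp add: vec_eq_iff axis_def sum.delta' if_distrib cong: if_cong)
  hence "N v \<le> (\<Sum>i\<in>UNIV. N (v$i *\<^sub>R axis i 1))" using seminorm_sum[OF assms] by metis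
  also have "\<dots> = (\<Sum>i\<in>UNIV. \<bar>v$i\<bar> * N (axis i 1))" using assms unfolding seminorm_def by simp
  also have "\<dots> \<le> (\<Sum>i\<in>UNIV. N (axis i 1) * norm v)"
  proof (rule sum_mono)
    fix i have "\<bar>v$i\<bar> \<le> norm v" by (rule component_le_norm_cart)
    moreover have "N (axis i 1) \<ge> 0" using assms unfolding seminorm_def by auto
    ultimately show "\<bar>v$i\<bar> * N (axis i 1) \<le> N (axis i 1) * norm v"
      by (metis mult.commute mult_left_mono)
  qed
  finally show ?thesis by (simp add: sum_distrib_right)
qed

lemma ogd_in: assumes "decision_space F" "x1 \<in> F" shows "ogd F eta g x1 (Suc t) \<in> F"
  using assms by (cases t) (auto simp: decision_space_def intro: closest_point_in_set)

lemma ogd_step: assumes "decision_space F" "x1 \<in> F" "admissible F G c g" "\<And>u. 0 < eta u"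
  shows "norm (ogd F eta g x1 (Suc (Suc s)) - ogd F eta g x1 (Suc s)) \<le> eta (Suc s) * G"
proof -
  let ?x = "ogd F eta g x1 (Suc s)"
  have xin: "?x \<in> F" using ogd_in assms by blast
  have F: "convex F" "closed F" "F \<noteq> {}" using assms(1) by (auto simp: decision_space_def)
  have "?x = closest_point F ?x" using closest_point_self[OF xin] by simp
  hence "norm (ogd F eta g x1 (Suc (Suc s)) - ?x) = dist (closest_point F (?x - eta (Suc s) *\<^sub>R g (Suc s) ?x)) (closest_point F ?x)"
    by (simp add: dist_norm)
  also have "\<dots> \<le> dist (?x - eta (Suc s) *\<^sub>R g (Suc s) ?x) ?x" by (rule closest_point_lipschitz[OF F])
  also have "\<dots> = eta (Suc s) * norm (g (Suc s) ?x)" using assms(4)[of "Suc s"] by (simp add: dist_norm)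
  also have "\<dots> \<le> eta (Suc s) * G" using assms(3) xin assms(4)[of "Suc s"] unfolding admissible_def
    by (simp add: mult_left_mono less_imp_le)
  finally show ?thesis .
qed

lemma switch_bound: assumes "decision_space F" "x1 \<in> F" "admissible F G c g" "\<And>t. 0 < eta t" "seminorm N"
  shows "(\<Sum>t=1..T. N (ogd F eta g x1 t - ogd F eta g x1 (t-1)))
     \<le> N x1 + (\<Sum>i\<in>UNIV. N (axis i 1)) * G * (\<Sum>t\<in>{1..<T}. eta t)"
proof (induction T)
  case 0 then show ?case using assms(5) by (simp add: seminorm_def)
next
  case (Suc T)
  show ?case
  proof (cases T)
    case 0 then show ?thesis by simp
  next
    case (Suc m)
    let ?D = "(\<Sum>i\<in>UNIV. N (axis i 1))"
    have D: "?D \<ge> 0" using assms(5) by (simp add: seminorm_def sum_nonneg)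
    have "N (ogd F eta g x1 (Suc T) - ogd F eta g x1 T) \<le> ?D * norm (ogd F eta g x1 (Suc T) - ogd F eta g x1 T)"
      by (rule seminorm_bound[OF assms(5)])
    also have "\<dots> \<le> ?D * (eta T * G)" using ogd_step[of F x1 G c g eta m] assms Suc D
      by (simp add: mult_left_mono)
    finally have st: "N (ogd F eta g x1 (Suc T) - ogd F eta g x1 T) \<le> ?D * G * eta T" by (simp add: mult_ac)
    have "{1..<Suc T} = insert T {1..<T}" using Suc by auto
    hence "(\<Sum>t\<in>{1..<Suc T}. eta t) = eta T + (\<Sum>t\<in>{1..<T}. eta t)" by simp
    then show ?thesis using Suc.IH st by (simp add: algebra_simps)
  qed
qed

theorem proposition1:
  fixes F :: "(real ^ 'n) set" and N :: "real ^ 'n \<Rightarrow> real" and G :: real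
    and eta :: "nat \<Rightarrow> real" and x1 :: "real ^ 'n" and \<rho>1 \<rho>2 :: "nat \<Rightarrow> real"
  assumes "decision_space F" and "seminorm N" and "x1 \<in> F"
    and "\<And>t. 0 < eta t"
    and "\<And>T. 0 \<le> \<rho>1 T" and "\<And>T. 0 \<le> \<rho>2 T"
    and "\<exists>b>0. \<forall>\<^sub>F T in sequentially. b \<le> \<rho>1 T + \<rho>2 T"
    and "(\<lambda>T. \<Sum>t=1..T. eta t) \<in> O(\<rho>1)"
    and "\<exists>K. \<forall>\<^sub>F T in sequentially. \<forall>c g. admissible F G c g \<longrightarrow>
           cost N 0 c (ogd F eta g x1) T - OPT_s F c T \<le> K * \<rho>2 T"
  shows "\<exists>K. \<forall>\<^sub>F T in sequentially. \<forall>c g. admissible F G c g \<longrightarrow>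
           cost N 1 c (ogd F eta g x1) T - OPT_s F c T \<le> K * (\<rho>1 T + \<rho>2 T)"
proof -
  obtain b where b: "b > 0" and evb: "\<forall>\<^sub>F T in sequentially. b \<le> \<rho>1 T + \<rho>2 T" using assms(7) by blast
  obtain C where C: "C > 0" and evC: "\<forall>\<^sub>F T in sequentially. norm (\<Sum>t=1..T. eta t) \<le> C * norm (\<rho>1 T)"
    using landau_o.bigE[OF assms(8)] by blast
  obtain K2 where evK: "\<forall>\<^sub>F T in sequentially. \<forall>c g. admissible F G c g \<longrightarrow>
           cost N 0 c (ogd F eta g x1) T - OPT_s F c T \<le> K2 * \<rho>2 T" using assms(9) by blast
  define D where "D = (\<Sum>i\<in>UNIV. N (axis i 1))"
  have D0: "D \<ge> 0" using assms(2) by (simp add: D_def seminorm_def sum_nonneg)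
  have Nx1: "N x1 \<ge> 0" using assms(2) by (simp add: seminorm_def)
  define K where "K = max K2 0 + D * max G 0 * C + N x1 / b"
  show ?thesis
  proof (rule exI[of _ K], use evb evC evK in \<open>eventually_elim\<close>, intro allI impI)
    fix T c g
    assume hb: "b \<le> \<rho>1 T + \<rho>2 T" and hC: "norm (\<Sum>t=1..T. eta t) \<le> C * norm (\<rho>1 T)"
      and hK: "\<forall>c g. admissible F G c g \<longrightarrow> cost N 0 c (ogd F eta g x1) T - OPT_s F c T \<le> K2 * \<rho>2 T"
      and adm: "admissible F G c g"
    have G0: "G \<ge> 0" using adm assms(1) unfolding admissible_def decision_space_def
      by (meson all_not_in_conv norm_ge_zero order_trans)
    have r1: "\<rho>1 T \<ge> 0" and r2: "\<rho>2 T \<ge> 0" using assms(5,6) by auto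
    have sumeta: "(\<Sum>t=1..T. eta t) \<le> C * \<rho>1 T" using hC r1 by simp
    have sub: "(\<Sum>t\<in>{1..<T}. eta t) \<le> (\<Sum>t=1..T. eta t)"
      by (rule sum_mono2) (auto simp: less_imp_le assms(4))
    let ?x = "ogd F eta g x1"
    have split: "cost N 1 c ?x T = cost N 0 c ?x T + (\<Sum>t=1..T. N (?x t - ?x (t-1)))"
      unfolding cost_def by (simp add: sum.distrib)
    have S: "(\<Sum>t=1..T. N (?x t - ?x (t-1))) \<le> N x1 + D * G * (\<Sum>t\<in>{1..<T}. eta t)"
      using switch_bound[OF assms(1,3) adm assms(4,2)] by (simp add: D_def)
    have "D * G * (\<Sum>t\<in>{1..<T}. eta t) \<le> D * G * (C * \<rho>1 T)"
      using sub sumeta D0 G0 by (meson mult_left_mono mult_nonneg_nonneg order_trans)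
    also have "\<dots> \<le> (D * max G 0 * C) * (\<rho>1 T + \<rho>2 T)"
      using D0 G0 C r1 r2 by (simp add: algebra_simps)
    finally have t1: "D * G * (\<Sum>t\<in>{1..<T}. eta t) \<le> (D * max G 0 * C) * (\<rho>1 T + \<rho>2 T)" .
    have t2: "N x1 \<le> (N x1 / b) * (\<rho>1 T + \<rho>2 T)"
    proof -
      have "N x1 = (N x1 / b) * b" using b by simp
      also have "\<dots> \<le> (N x1 / b) * (\<rho>1 T + \<rho>2 T)" using hb Nx1 b by (intro mult_left_mono) auto
      finally show ?thesis .
    qed
    have t3: "K2 * \<rho>2 T \<le> max K2 0 * (\<rho>1 T + \<rho>2 T)"
      using r1 r2 by (smt (verit) mult_left_mono mult_right_mono max.cobounded1 max.cobounded2)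
    have "cost N 1 c ?x T - OPT_s F c T \<le> K2 * \<rho>2 T + N x1 + D * G * (\<Sum>t\<in>{1..<T}. eta t)"
      using split S hK adm by force
    also have "\<dots> \<le> K * (\<rho>1 T + \<rho>2 T)" using t1 t2 t3 unfolding K_def by (simp add: algebra_simps)
    finally show "cost N 1 c ?x T - OPT_s F c T \<le> K * (\<rho>1 T + \<rho>2 T)" .
  qed
qed

end
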